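(* Let $X=(I,(\cdot,\cdot))$ be a Cartan datum and $\sigma$ an admissible diagram automorphism of $X$ of order $n=am$; put $\tau=\sigma^m$. Let $X^\tau=(I^\tau,(\cdot,\cdot)_\tau)$ be the Cartan datum induced from $(X,\tau)$, let $\underline\sigma$ be the permutation of $I^\tau$ induced by $\sigma$ (an admissible diagram automorphism of $X^\tau$), and let $(\underline I^\tau,(\cdot,\cdot)_2)$ be the Cartan datum induced from $(X^\tau,\underline\sigma)$. Identify $\underline I^\tau$ with the set $\underline I$ of $\sigma$-orbits in $I$ by sending a $\underline\sigma$-orbit $\tilde\eta$ to $\eta=\bigcup_{\gamma\in\tilde\eta}\gamma$. Then under $\alpha_{\tilde\eta}\mapsto\alpha_\eta$ one has $(\alpha_{\tilde\eta},\alpha_{\tilde\eta'})_2=(\alpha_\eta,\alpha_{\eta'})_1$ for all $\tilde\eta,\tilde\eta'$; hence the Cartan datum induced from $(X^\tau,\underline\sigma)$ is isomorphic to the Cartan datum $\underline X=(\underline I,(\cdot,\cdot)_1)$ induced from $(X,\sigma)$.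
   Context: A Cartan datum $X=(I,(\cdot,\cdot))$ is a finite set $I$ with a symmetric bilinear form on $\bigoplus_{i\in I}\mathbb Q\alpha_i$ such that $(\alpha_i,\alpha_j)\in\mathbb Z$, $(\alpha_i,\alpha_i)\in2\mathbb Z_{>0}$, and $2(\alpha_i,\alpha_j)/(\alpha_i,\alpha_i)\in\mathbb Z_{\le0}$ for $i\ne j$. A diagram automorphism is a permutation $\sigma$ of $I$ with $(\alpha_{\sigma(i)},\alpha_{\sigma(j)})=(\alpha_i,\alpha_j)$; it is admissible if $(\alpha_i,\alpha_j)=0$ for all distinct $i,j$ in the same $\sigma$-orbit. For such $\sigma$ with orbit set $\underline I$, the Cartan datum induced from $(X,\sigma)$ is $(\underline I,(\cdot,\cdot)_1)$ with form on $\bigoplus_{\eta\in\underline I}\mathbb Q\alpha_\eta$ given by $(\alpha_\eta,\alpha_\eta)_1=(\alpha_i,\alpha_i)|\eta|$ for any $i\in\eta$, and $(\alpha_\eta,\alpha_{\eta'})_1=\sum_{i\in\eta,j\in\eta'}(\alpha_i,\alpha_j)$ for $\eta\ne\eta'$. Two Cartan data are isomorphic if there is a bijection of index sets carrying one form to the other. *)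

theory Defs
  imports "HOL-Combinatorics.Permutations"
begin

text \<open>A Cartan datum is represented by a finite index set I together with the
values B i j = (alpha_i, alpha_j) of the symmetric bilinear form on the basis
(the form is determined by these values by bilinearity).\<close>

definition cartan_datum :: "'a set \<Rightarrow> ('a \<Rightarrow> 'a \<Rightarrow> int) \<Rightarrow> bool" where
  "cartan_datum I B \<longleftrightarrow> finite I \<and>
     (\<forall>i\<in>I. \<forall>j\<in>I. B i j = B j i) \<and>
     (\<forall>i\<in>I. B i i > 0 \<and> even (B i i)) \<and>
     (\<forall>i\<in>I. \<forall>j\<in>I. i \<noteq> j \<longrightarrow> B i i dvd 2 * B i j \<and> B i j \<le> 0)"

definition diagram_aut :: "'a set \<Rightarrow> ('a \<Rightarrow> 'a \<Rightarrow> int) \<Rightarrow> ('a \<Rightarrow> 'a) \<Rightarrow> bool" where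
  "diagram_aut I B \<sigma> \<longleftrightarrow> \<sigma> permutes I \<and> (\<forall>i\<in>I. \<forall>j\<in>I. B (\<sigma> i) (\<sigma> j) = B i j)"

definition orbit_of :: "('a \<Rightarrow> 'a) \<Rightarrow> 'a \<Rightarrow> 'a set" where
  "orbit_of \<sigma> i = {(\<sigma> ^^ k) i | k. True}"

definition orbits :: "'a set \<Rightarrow> ('a \<Rightarrow> 'a) \<Rightarrow> 'a set set" where
  "orbits I \<sigma> = orbit_of \<sigma> ` I"

definition admissible :: "'a set \<Rightarrow> ('a \<Rightarrow> 'a \<Rightarrow> int) \<Rightarrow> ('a \<Rightarrow> 'a) \<Rightarrow> bool" where
  "admissible I B \<sigma> \<longleftrightarrow> diagram_aut I B \<sigma> \<and>
     (\<forall>i\<in>I. \<forall>j\<in>orbit_of \<sigma> i. i \<noteq> j \<longrightarrow> B i j = 0)"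

definition perm_order_is :: "('a \<Rightarrow> 'a) \<Rightarrow> nat \<Rightarrow> bool" where
  "perm_order_is \<sigma> n \<longleftrightarrow> n > 0 \<and> \<sigma> ^^ n = id \<and> (\<forall>k. 0 < k \<and> k < n \<longrightarrow> \<sigma> ^^ k \<noteq> id)"

definition induced_form :: "('a \<Rightarrow> 'a \<Rightarrow> int) \<Rightarrow> 'a set \<Rightarrow> 'a set \<Rightarrow> int" where
  "induced_form B \<eta> \<eta>' =
     (if \<eta> = \<eta>' then B (SOME i. i \<in> \<eta>) (SOME i. i \<in> \<eta>) * int (card \<eta>)
      else (\<Sum>i\<in>\<eta>. \<Sum>j\<in>\<eta>'. B i j))"

definition cartan_iso :: "'a set \<Rightarrow> ('a \<Rightarrow> 'a \<Rightarrow> int) \<Rightarrow> 'b set \<Rightarrow> ('b \<Rightarrow> 'b \<Rightarrow> int) \<Rightarrow> bool" where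
  "cartan_iso I B J C \<longleftrightarrow> (\<exists>h. bij_betw h I J \<and> (\<forall>i\<in>I. \<forall>j\<in>I. C (h i) (h j) = B i j))"

end

theory Submission
  imports Defs
begin

lemma funpow_comm_apply: "(g^^k) ((g^^p) x) = (g^^p) ((g^^k) x)"
  by (metis add.commute comp_apply funpow_add)

lemma orbit_self: "i \<in> orbit_of f i"
  unfolding orbit_of_def by (auto intro: exI[of _ 0])

lemma orbit_trans: "j \<in> orbit_of f i \<Longrightarrow> orbit_of f j \<subseteq> orbit_of f i"
proof
  fix x assume j: "j \<in> orbit_of f i" and x: "x \<in> orbit_of f j"
  obtain k where k: "j = (f^^k) i" using j unfolding orbit_of_def by blast
  obtain l where l: "x = (f^^l) j" using x unfolding orbit_of_def by blast
  have "x = (f^^(l+k)) i" by (simp add: k l funpow_add)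
  then show "x \<in> orbit_of f i" unfolding orbit_of_def by blast
qed

lemma orbit_sym:
  assumes "f^^p = id" "p > 0" "j \<in> orbit_of f i"
  shows "i \<in> orbit_of f j"
proof -
  obtain k where k: "j = (f^^k) i" using assms(3) unfolding orbit_of_def by blast
  have kk: "k \<le> p*k" using assms(2) by simp
  have "(f^^(p*k - k)) j = (f^^(p*k - k + k)) i" by (simp add: k funpow_add)
  also have "\<dots> = (f^^(p*k)) i" using kk by simp
  also have "\<dots> = ((f^^p)^^k) i" by (simp add: funpow_mult)
  also have "\<dots> = i" using assms(1) by (induction k) simp_all
  finally show ?thesis unfolding orbit_of_def by blast
qed

lemma orbit_eq:
  assumes "f^^p = id" "p > 0" "j \<in> orbit_of f i"
  shows "orbit_of f j = orbit_of f i"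
  using orbit_trans[OF assms(3)] orbit_trans[OF orbit_sym[OF assms]] by blast

lemma orbit_disj:
  assumes "f^^p = id" "p > 0" "orbit_of f i \<noteq> orbit_of f j"
  shows "orbit_of f i \<inter> orbit_of f j = {}"
proof (rule ccontr)
  assume "orbit_of f i \<inter> orbit_of f j \<noteq> {}"
  then obtain x where "x \<in> orbit_of f i" "x \<in> orbit_of f j" by blast
  then show False using orbit_eq[OF assms(1,2)] assms(3) by metis
qed

lemma orbit_sub: "f ` I \<subseteq> I \<Longrightarrow> i \<in> I \<Longrightarrow> orbit_of f i \<subseteq> I"
proof -
  assume a: "f ` I \<subseteq> I" "i \<in> I"
  have "(f^^k) i \<in> I" for k using a by (induction k) auto
  then show ?thesis unfolding orbit_of_def by blast
qed

lemma image_funpow: "((\<lambda>\<gamma>. f ` \<gamma>)^^k) \<gamma> = ((f::'a\<Rightarrow>'a)^^k) ` \<gamma>"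
  by (induction k) (simp_all add: image_comp)

lemma funpow_image_orbit: "(g^^k) ` orbit_of (g^^m) i = orbit_of (g^^m) ((g^^k) i)"
  unfolding orbit_of_def
  by (auto simp: funpow_mult funpow_comm_apply)

lemma tau_sub_sigma: "orbit_of (g^^m) i \<subseteq> orbit_of g i"
  unfolding orbit_of_def by (auto simp: funpow_mult)

theorem lemma2p4:
  fixes I :: "'a set" and B :: "'a \<Rightarrow> 'a \<Rightarrow> int" and \<sigma> :: "'a \<Rightarrow> 'a"
    and n a m :: nat
  assumes "cartan_datum I B"
    and "admissible I B \<sigma>"
    and "perm_order_is \<sigma> n"
    and "n = a * m"
  defines "\<tau> \<equiv> \<sigma> ^^ m"
  defines "I\<tau> \<equiv> orbits I \<tau>"
  defines "B\<tau> \<equiv> induced_form B"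
  defines "\<sigma>u \<equiv> (\<lambda>\<gamma>. \<sigma> ` \<gamma>)"
  shows "bij_betw (\<lambda>\<eta>t. \<Union>\<eta>t) (orbits I\<tau> \<sigma>u) (orbits I \<sigma>)
    \<and> (\<forall>\<eta>t\<in>orbits I\<tau> \<sigma>u. \<forall>\<eta>t'\<in>orbits I\<tau> \<sigma>u.
          induced_form B\<tau> \<eta>t \<eta>t' = induced_form B (\<Union>\<eta>t) (\<Union>\<eta>t'))
    \<and> cartan_iso (orbits I\<tau> \<sigma>u) (induced_form B\<tau>) (orbits I \<sigma>) (induced_form B)"
proof -
  have fin: "finite I" using assms(1) unfolding cartan_datum_def by blast
  have perm: "\<sigma> permutes I" and Binv: "\<And>i j. i \<in> I \<Longrightarrow> j \<in> I \<Longrightarrow> B (\<sigma> i) (\<sigma> j) = B i j"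
    using assms(2) unfolding admissible_def diagram_aut_def by blast+
  have sn: "\<sigma>^^n = id" "n > 0" using assms(3) unfolding perm_order_is_def by blast+
  then have am: "a > 0" "m > 0" using assms(4) by auto
  have ta: "\<tau>^^a = id" unfolding \<tau>_def using sn(1) assms(4) by (simp add: funpow_mult mult.commute)
  have sI: "\<sigma> ` I \<subseteq> I" using permutes_image[OF perm] by simp
  have injs: "inj (\<sigma>^^k)" for k using permutes_inj[OF perm] by simp
  define F where "F Q = orbit_of \<tau> ` Q" for Q
  define S where "S = orbits I \<sigma>"
  have key1: "orbit_of \<sigma>u (orbit_of \<tau> i) = F (orbit_of \<sigma> i)" for i
  proof -
    have "orbit_of \<sigma>u (orbit_of \<tau> i) = {(\<sigma>^^k) ` orbit_of \<tau> i | k. True}"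
      unfolding \<sigma>u_def orbit_of_def[of "(`) \<sigma>"] image_funpow ..
    also have "\<dots> = {orbit_of \<tau> ((\<sigma>^^k) i) | k. True}"
      unfolding \<tau>_def funpow_image_orbit ..
    also have "\<dots> = F (orbit_of \<sigma> i)" unfolding F_def orbit_of_def[of \<sigma>] by blast
    finally show ?thesis .
  qed
  have key2: "orbits I\<tau> \<sigma>u = F ` S"
    unfolding orbits_def I\<tau>_def S_def image_image key1 ..
  have Ssub: "Q \<subseteq> I" if "Q \<in> S" for Q
    using that orbit_sub[OF sI] unfolding S_def orbits_def by blast
  have Sfin: "finite Q" if "Q \<in> S" for Q using Ssub[OF that] fin finite_subset by blast
  have key3: "\<Union>(F Q) = Q" if QS: "Q \<in> S" for Q
  proof -
    obtain i where Q: "Q = orbit_of \<sigma> i" using QS unfolding S_def orbits_def by blast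
    have "orbit_of \<tau> j \<subseteq> Q" if "j \<in> Q" for j
      using tau_sub_sigma[where g=\<sigma> and m=m and i=j] orbit_trans[where j=j and f=\<sigma> and i=i] that Q unfolding \<tau>_def by blast
    then show ?thesis unfolding F_def using orbit_self[of _ \<tau>] by blast
  qed
  have Fsub: "\<gamma> \<subseteq> Q" if "Q \<in> S" "\<gamma> \<in> F Q" for Q \<gamma> using key3[OF that(1)] that(2) by blast
  have Fdisj: "\<forall>A\<in>F Q. \<forall>B\<in>F Q. A \<noteq> B \<longrightarrow> A \<inter> B = {}" for Q
    unfolding F_def using orbit_disj[OF ta am(1)] by blast
  have Ffin: "\<forall>A\<in>F Q. finite A" if "Q \<in> S" for Q using Fsub[OF that] Sfin[OF that] finite_subset by blast
  have sumF: "sum g Q = (\<Sum>\<gamma>\<in>F Q. sum g \<gamma>)" if "Q \<in> S" for Q and g :: "'a \<Rightarrow> int"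
    using sum.Union_disjoint[OF Ffin[OF that] Fdisj, of g] key3[OF that] by simp
  have bij: "bij_betw Union (F ` S) S"
    unfolding bij_betw_def inj_on_def using key3 by (auto simp: image_image)
  have form: "induced_form B\<tau> (F Q) (F Q') = induced_form B Q Q'" if Q: "Q \<in> S" and Q': "Q' \<in> S" for Q Q'
  proof (cases "Q = Q'")
    case True
    obtain i where i: "i \<in> I" "Q = orbit_of \<sigma> i" using Q unfolding S_def orbits_def by blast
    have diag: "B x x = B i i" if xQ: "x \<in> Q" for x
    proof -
      obtain k where k: "x = (\<sigma>^^k) i" using xQ i unfolding orbit_of_def by blast
      have "(\<sigma>^^k) i \<in> I \<and> B ((\<sigma>^^k) i) ((\<sigma>^^k) i) = B i i" for k
        by (induction k) (use i sI Binv in auto)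
      then show ?thesis using k by blast
    qed
    have cardF: "card \<gamma> = card (orbit_of \<tau> i)" if gF: "\<gamma> \<in> F Q" for \<gamma>
    proof -
      obtain j where j: "j \<in> Q" "\<gamma> = orbit_of \<tau> j" using gF unfolding F_def by blast
      obtain k where k: "j = (\<sigma>^^k) i" using j i unfolding orbit_of_def by blast
      have "\<gamma> = (\<sigma>^^k) ` orbit_of \<tau> i" unfolding j k \<tau>_def funpow_image_orbit ..
      then show ?thesis using card_image[OF inj_on_subset[OF injs subset_UNIV]] by simp
    qed
    have cardO: "card Q = card (F Q) * card (orbit_of \<tau> i)"
    proof -
      have "card Q = card (\<Union>(F Q))" using key3[OF Q] by simp
      also have "\<dots> = sum card (F Q)"
        by (rule card_Union_disjoint) (use Fdisj Ffin[OF Q] in \<open>auto simp: pairwise_def disjnt_def\<close>)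
      also have "\<dots> = card (F Q) * card (orbit_of \<tau> i)" using cardF by simp
      finally show ?thesis .
    qed
    have ne: "F Q \<noteq> {}" unfolding F_def i using orbit_self[of i \<sigma>] by blast
    define \<gamma>0 where "\<gamma>0 = (SOME \<gamma>. \<gamma> \<in> F Q)"
    have g0: "\<gamma>0 \<in> F Q" unfolding \<gamma>0_def using ne some_in_eq by blast
    have g0ne: "\<gamma>0 \<noteq> {}" using g0 unfolding F_def using orbit_self[of _ \<tau>] by blast
    have i0: "(SOME x. x \<in> \<gamma>0) \<in> Q" using g0ne Fsub[OF Q g0] some_in_eq by blast
    have j0: "(SOME x. x \<in> Q) \<in> Q" using i orbit_self[of i \<sigma>] some_in_eq by blast
    have "induced_form B\<tau> (F Q) (F Q') = induced_form B \<gamma>0 \<gamma>0 * int (card (F Q))"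
      unfolding True[symmetric] \<gamma>0_def B\<tau>_def by (simp add: induced_form_def[of "induced_form B"])
    also have "\<dots> = B i i * int (card (orbit_of \<tau> i)) * int (card (F Q))"
      unfolding induced_form_def using diag[OF i0] cardF[OF g0] by simp
    also have "\<dots> = induced_form B Q Q'"
      unfolding induced_form_def True[symmetric] using diag[OF j0] cardO by simp
    finally show ?thesis .
  next
    case False
    have FF: "F Q \<noteq> F Q'" using False key3[OF Q] key3[OF Q'] by metis
    obtain i where i: "Q = orbit_of \<sigma> i" using Q unfolding S_def orbits_def by blast
    obtain i' where i': "Q' = orbit_of \<sigma> i'" using Q' unfolding S_def orbits_def by blast
    have dj: "Q \<inter> Q' = {}" using orbit_disj[OF sn(1,2)] False i i' by blast
    have neq: "\<gamma> \<noteq> \<gamma>'" if "\<gamma> \<in> F Q" "\<gamma>' \<in> F Q'" for \<gamma> \<gamma>'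
    proof -
      have "\<gamma> \<noteq> {}" using that(1) orbit_self[of _ \<tau>] unfolding F_def by blast
      then show ?thesis using Fsub[OF Q that(1)] Fsub[OF Q' that(2)] dj by blast
    qed
    have "induced_form B\<tau> (F Q) (F Q') = (\<Sum>\<gamma>\<in>F Q. \<Sum>\<gamma>'\<in>F Q'. \<Sum>x\<in>\<gamma>. \<Sum>y\<in>\<gamma>'. B x y)"
      unfolding induced_form_def[of B\<tau>] B\<tau>_def using FF neq
      by (auto simp: induced_form_def intro!: sum.cong)
    also have "\<dots> = (\<Sum>\<gamma>\<in>F Q. \<Sum>x\<in>\<gamma>. \<Sum>\<gamma>'\<in>F Q'. \<Sum>y\<in>\<gamma>'. B x y)"
      by (rule sum.cong[OF refl], rule sum.swap)
    also have "\<dots> = (\<Sum>\<gamma>\<in>F Q. \<Sum>x\<in>\<gamma>. \<Sum>y\<in>Q'. B x y)"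
      using sumF[OF Q'] by simp
    also have "\<dots> = (\<Sum>x\<in>Q. \<Sum>y\<in>Q'. B x y)"
      using sumF[OF Q] by simp
    also have "\<dots> = induced_form B Q Q'" unfolding induced_form_def using False by simp
    finally show ?thesis .
  qed
  have part2: "\<forall>\<eta>t\<in>orbits I\<tau> \<sigma>u. \<forall>\<eta>t'\<in>orbits I\<tau> \<sigma>u.
          induced_form B\<tau> \<eta>t \<eta>t' = induced_form B (\<Union>\<eta>t) (\<Union>\<eta>t')"
    unfolding key2 using form key3 by auto
  have part1: "bij_betw (\<lambda>\<eta>t. \<Union>\<eta>t) (orbits I\<tau> \<sigma>u) (orbits I \<sigma>)"
    using bij unfolding key2 S_def by simp
  have part3: "cartan_iso (orbits I\<tau> \<sigma>u) (induced_form B\<tau>) (orbits I \<sigma>) (induced_form B)"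
    unfolding cartan_iso_def using part1 part2 by (intro exI[of _ Union] conjI) auto
  show ?thesis using part1 part2 part3 by blast
qed

end
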